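(* Let $n$ be even. The map $\mathrm{Sm}(v_0,\dots,v_n)=2^{-(n+1)}\sum_{\sigma_0,\dots,\sigma_n\in\{\pm1\}}S(\sigma_0v_0,\dots,\sigma_nv_n)$ descends to a map $(\mathbb{P}(\mathbb{R}^n))^{n+1}\to\mathbb{R}_\varepsilon$ which is $\mathrm{GL}_n(\mathbb{R})$-equivariant (i.e. $\mathrm{Sm}(gv_0,\dots,gv_n)=\operatorname{sign}(\det g)\mathrm{Sm}(v_0,\dots,v_n)$), and its coboundary $d\,\mathrm{Sm}$ vanishes on all hereditarily spanning $(n+2)$-tuples.
   Context: $\mathrm{Or}(v_1,\dots,v_n)=\operatorname{sign}\det(v_1,\dots,v_n)$ (zero if not a basis). $S:(\mathbb{R}^n)^{n+1}\to\{-1,0,1\}$ is defined by $S(v_0,\dots,v_n)=0$ if $0$ is not in the interior of the convex hull of $v_0,\dots,v_n$, and otherwise $S(v_0,\dots,v_n)=(-1)^i\mathrm{Or}(v_0,\dots,\widehat{v_i},\dots,v_n)$ for any $i$ (independent of $i$). $\mathbb{R}_\varepsilon$ is $\mathbb{R}$ with $g$ acting by $\operatorname{sign}\det g$. A tuple is hereditarily spanning if any $n$ of its entries span $\mathbb{R}^n$. $d$ is the alternating sum of omissions of variables. *)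

theory Defs
  imports "HOL-Analysis.Analysis"
begin

text \<open>Vectors of R^n are elements of real^'n, with n = CARD('n). The coordinate
  index type 'n carries a linear order, used to identify it with {0..n-1}
  (position of a coordinate j is the number of coordinates smaller than j).\<close>

definition coord_pos :: "'n::{finite,linorder} \<Rightarrow> nat" where
  "coord_pos j = card {k. k < j}"

definition Or :: "(nat \<Rightarrow> real^'n::{finite,linorder}) \<Rightarrow> real" where
  "Or w = sgn (det (\<chi> i j. w (coord_pos j) $ i))"

text \<open>S(v_0,...,v_n): zero unless 0 is in the interior of the convex hull,
  otherwise (-1)^i Or(v_0,..,omit v_i,..,v_n), here taken with i = 0.\<close>
definition S :: "(nat \<Rightarrow> real^'n::{finite,linorder}) \<Rightarrow> real" where
  "S v = (if 0 \<in> interior (convex hull (v ` {..CARD('n)}))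
          then Or (\<lambda>k. v (Suc k)) else 0)"

definition Sm :: "(nat \<Rightarrow> real^'n::{finite,linorder}) \<Rightarrow> real" where
  "Sm v = (1 / 2 ^ (CARD('n) + 1)) *
     (\<Sum>\<sigma> \<in> Pi\<^sub>E {..CARD('n)} (\<lambda>_. {-1::real, 1}). S (\<lambda>i. \<sigma> i *\<^sub>R v i))"

definition omit :: "nat \<Rightarrow> (nat \<Rightarrow> 'a) \<Rightarrow> nat \<Rightarrow> 'a" where
  "omit i w k = (if k < i then w k else w (Suc k))"

definition cobdry :: "((nat \<Rightarrow> real^'n::{finite,linorder}) \<Rightarrow> real) \<Rightarrow> (nat \<Rightarrow> real^'n::{finite,linorder}) \<Rightarrow> real" where
  "cobdry f w = (\<Sum>i\<le>CARD('n) + 1. (-1) ^ i * f (omit i w))"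

definition hered_spanning :: "(nat \<Rightarrow> real^'n::{finite,linorder}) \<Rightarrow> bool" where
  "hered_spanning w \<longleftrightarrow>
     (\<forall>I \<subseteq> {..CARD('n) + 1}. card I = CARD('n) \<longrightarrow> span (w ` I) = UNIV)"

end

theory Submission imports Defs begin

lemma cp_lt: "coord_pos (j::'n::{finite,linorder}) < CARD('n)"
  unfolding coord_pos_def
  by (rule psubset_card_mono) auto

lemma cp_inj: "inj (coord_pos :: 'n::{finite,linorder} \<Rightarrow> nat)"
proof
  fix a b :: 'n assume e: "coord_pos a = coord_pos b"
  show "a = b"
  proof (rule ccontr)
    assume "a \<noteq> b"
    then consider "a < b" | "b < a" by fastforce
    then show False
    proof cases
      case 1
      then have "{k. k < a} \<subset> {k. k < b}" by auto
      then have "card {k. k < a} < card {k. k < b}" by (rule psubset_card_mono[rotated]) simp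
      with e show False unfolding coord_pos_def by simp
    next
      case 2
      then have "{k. k < b} \<subset> {k. k < a}" by auto
      then have "card {k. k < b} < card {k. k < a}" by (rule psubset_card_mono[rotated]) simp
      with e show False unfolding coord_pos_def by simp
    qed
  qed
qed

lemma cp_range: "range (coord_pos :: 'n::{finite,linorder} \<Rightarrow> nat) = {..<CARD('n)}"
proof -
  have "range (coord_pos :: 'n \<Rightarrow> nat) \<subseteq> {..<CARD('n)}" using cp_lt by auto
  moreover have "card (range (coord_pos :: 'n \<Rightarrow> nat)) = CARD('n)"
    using cp_inj card_image by blast
  ultimately show ?thesis
    by (metis card_lessThan card_subset_eq finite_lessThan)
qed

lemma cp_bij: "bij_betw (coord_pos :: 'n::{finite,linorder} \<Rightarrow> nat) UNIV {..<CARD('n)}"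
  using cp_inj cp_range by (simp add: bij_betw_def)

definition cpi :: "nat \<Rightarrow> 'n::{finite,linorder}" where
  "cpi k = inv coord_pos k"

lemma cp_cpi: "k < CARD('n::{finite,linorder}) \<Longrightarrow> coord_pos (cpi k :: 'n) = k"
  unfolding cpi_def using cp_range f_inv_into_f[of k coord_pos UNIV] by auto

lemma cpi_cp: "cpi (coord_pos (j::'n::{finite,linorder})) = j"
  unfolding cpi_def by (rule inv_f_f[OF cp_inj])

lemma smul_eq: "c *s (x::real^'m) = c *\<^sub>R x"
  by (simp add: vec_eq_iff)

definition detl :: "(nat \<Rightarrow> real^'n::{finite,linorder}) \<Rightarrow> real" where
  "detl w = det (\<chi> i j. w (coord_pos j) $ i)"

lemma Or_detl: "Or w = sgn (detl w)"
  by (simp add: Or_def detl_def)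

lemma detl_rows: "detl (w::nat \<Rightarrow> real^'n::{finite,linorder}) = det (\<chi> j. w (coord_pos j))"
proof -
  have e: "(\<chi> i j. w (coord_pos j) $ i) = transpose (\<chi> j. w (coord_pos j))"
    by (simp add: transpose_def vec_eq_iff)
  show ?thesis unfolding detl_def e det_transpose ..
qed

lemma detl_cong: "(\<And>k. k < CARD('n) \<Longrightarrow> w k = w' k) \<Longrightarrow> detl (w::nat \<Rightarrow> real^'n::{finite,linorder}) = detl w'"
  unfolding detl_def by (rule arg_cong[where f=det]) (simp add: vec_eq_iff cp_lt)

lemma detl_swap:
  assumes "a < CARD('n)" "b < CARD('n)" "a \<noteq> b"
  shows "detl ((w::nat \<Rightarrow> real^'n::{finite,linorder})(a := w b, b := w a)) = - detl w"
proof -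
  let ?t = "Transposition.transpose (cpi a :: 'n) (cpi b)"
  have ne: "cpi a \<noteq> (cpi b :: 'n)" using assms cp_cpi by metis
  have p: "?t permutes UNIV" by (simp add: permutes_swap_id)
  have h: "(w(a := w b, b := w a)) (coord_pos j) = w (coord_pos (?t j))" for j
  proof -
    consider "j = cpi a" | "j = cpi b" | "j \<noteq> cpi a" "j \<noteq> cpi b" by blast
    then show ?thesis
    proof cases
      case 1 then show ?thesis using assms by (simp add: cp_cpi transpose_def)
    next
      case 2 then show ?thesis using assms ne by (simp add: cp_cpi transpose_def)
    next
      case 3
      then have "coord_pos j \<noteq> a" "coord_pos j \<noteq> b" using cpi_cp by metis+
      with 3 show ?thesis by (simp add: transpose_def)
    qed
  qed
  have eq: "(\<chi> i j. (w(a := w b, b := w a)) (coord_pos j) $ i) = (\<chi> i j. (\<chi> i j. w (coord_pos j) $ i) $ i $ ?t j)"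
    by (simp only: h vec_lambda_beta)
  show ?thesis unfolding detl_def eq det_permute_columns[OF p] using ne by (simp add: sign_swap_id)
qed

lemma detl_upd_rows: "k < CARD('n) \<Longrightarrow>
   detl ((w::nat \<Rightarrow> real^'n::{finite,linorder})(k := x)) = det (\<chi> j. if j = cpi k then x else w (coord_pos j))"
  unfolding detl_rows by (rule arg_cong[where f=det]) (auto simp: vec_eq_iff cp_cpi cpi_cp dest: arg_cong[where f=cpi])

lemma detl_eq0:
  assumes "a < CARD('n)" "b < CARD('n)" "a \<noteq> b" "w a = w b"
  shows "detl (w::nat \<Rightarrow> real^'n::{finite,linorder}) = 0"
proof -
  have ne: "cpi a \<noteq> (cpi b :: 'n)" using assms cp_cpi by metis
  show ?thesis unfolding detl_rows
    by (rule det_identical_rows[OF ne]) (simp add: row_def vec_eq_iff cp_cpi assms)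
qed

lemma detl_add: "k < CARD('n) \<Longrightarrow>
   detl ((w::nat \<Rightarrow> real^'n::{finite,linorder})(k := x + y)) = detl (w(k := x)) + detl (w(k := y))"
  unfolding detl_upd_rows using det_row_add[of "cpi k :: 'n" "\<lambda>_. x" "\<lambda>_. y" "\<lambda>j. w (coord_pos j)"] by simp

lemma detl_smul: "k < CARD('n) \<Longrightarrow>
   detl ((w::nat \<Rightarrow> real^'n::{finite,linorder})(k := c *\<^sub>R x)) = c * detl (w(k := x))"
  unfolding detl_upd_rows smul_eq[symmetric] by (rule det_row_mul)

lemma detl_zero: "k < CARD('n) \<Longrightarrow> detl ((w::nat \<Rightarrow> real^'n::{finite,linorder})(k := 0)) = 0"
  using detl_smul[of k w 0 0] by simp

lemma detl_sum: assumes "k < CARD('n)" "finite A" shows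
   "detl ((w::nat \<Rightarrow> real^'n::{finite,linorder})(k := (\<Sum>m\<in>A. f m))) = (\<Sum>m\<in>A. detl (w(k := f m)))"
  using assms(2)
proof (induction A rule: finite_induct)
  case empty
  show ?case unfolding sum.empty by (rule detl_zero[OF assms(1)])
next
  case (insert a F)
  have "detl (w(k := (\<Sum>m\<in>insert a F. f m))) = detl (w(k := f a + (\<Sum>m\<in>F. f m)))"
    by (simp only: sum.insert[OF insert(1,2)])
  also have "\<dots> = detl (w(k := f a)) + detl (w(k := (\<Sum>m\<in>F. f m)))"
    by (rule detl_add[OF assms(1)])
  also have "\<dots> = detl (w(k := f a)) + (\<Sum>m\<in>F. detl (w(k := f m)))"
    by (simp only: insert.IH)
  also have "\<dots> = (\<Sum>m\<in>insert a F. detl (w(k := f m)))"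
    by (simp only: sum.insert[OF insert(1,2)])
  finally show ?case .
qed

lemma detl_scale_all: "detl (\<lambda>k. c k *\<^sub>R (w::nat \<Rightarrow> real^'n::{finite,linorder}) k) = (\<Prod>k<CARD('n). c k) * detl w"
proof -
  have "detl (\<lambda>k. c k *\<^sub>R w k) = det (\<chi> j. c (coord_pos j) *s w (coord_pos j))"
    unfolding detl_rows by (simp add: smul_eq)
  also have "\<dots> = (\<Prod>j\<in>UNIV. c (coord_pos (j::'n))) * detl w"
    unfolding det_rows_mul detl_rows ..
  also have "(\<Prod>j\<in>UNIV. c (coord_pos (j::'n))) = (\<Prod>k<CARD('n). c k)"
    by (rule prod.reindex_bij_betw[OF cp_bij])
  finally show ?thesis .
qed

lemma detl_mult: "detl (\<lambda>k. g *v (w::nat \<Rightarrow> real^'n::{finite,linorder}) k) = det g * detl w"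
proof -
  have "(\<chi> i j. (g *v w (coord_pos j)) $ i) = g ** ((\<chi> i j. w (coord_pos j) $ i)::((real,'n) vec,'n) vec)"
    by (simp add: vec_eq_iff matrix_matrix_mult_def matrix_vector_mult_def)
  then show ?thesis unfolding detl_def by (simp add: det_mul)
qed

lemma rows_detl: "rows (\<chi> j::'n. (w::nat \<Rightarrow> real^'n::{finite,linorder}) (coord_pos j)) = w ` {..<CARD('n)}"
proof -
  have "rows (\<chi> j::'n. w (coord_pos j)) = (\<lambda>j::'n. w (coord_pos j)) ` (UNIV::'n set)"
    unfolding rows_def row_def vec_lambda_eta by (auto simp: image_iff)
  also have "\<dots> = w ` range (coord_pos :: 'n \<Rightarrow> nat)" by (simp add: image_image)
  finally show ?thesis unfolding cp_range .
qed

lemma detl_span: "detl (w::nat \<Rightarrow> real^'n::{finite,linorder}) \<noteq> 0 \<longleftrightarrow> span (w ` {..<CARD('n)}) = UNIV"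
  unfolding detl_rows invertible_det_nz[symmetric] invertible_left_inverse
    matrix_left_invertible_span_rows rows_detl ..

lemma detl_cramer:
  assumes "detl (w::nat \<Rightarrow> real^'n::{finite,linorder}) \<noteq> 0"
  shows "x = (\<Sum>k<CARD('n). (detl (w(k := x)) / detl w) *\<^sub>R w k)"
proof -
  let ?A = "\<chi> i j. w (coord_pos j) $ i"
  let ?y = "\<chi> k. det(\<chi> i j. if j=k then x$i else ?A$i$j) / det ?A"
  have d: "det ?A \<noteq> 0" using assms by (simp add: detl_def)
  have "?A *v ?y = x" using cramer[OF d] by blast
  moreover have "?A *v ?y = (\<Sum>j\<in>UNIV. (detl (w(coord_pos (j::'n) := x)) / detl w) *\<^sub>R w (coord_pos j))"
  proof -
    have e: "det(\<chi> i j. if j=k then x$i else ?A$i$j) = detl (w(coord_pos k := x))" for k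
      unfolding detl_def by (rule arg_cong[where f=det]) (auto simp: vec_eq_iff dest: cp_inj[THEN injD])
    show ?thesis unfolding matrix_mult_sum e
      by (simp add: smul_eq column_def detl_def[symmetric] vec_eq_iff)
  qed
  moreover have "(\<Sum>j\<in>UNIV. (detl (w(coord_pos (j::'n) := x)) / detl w) *\<^sub>R w (coord_pos j)) =
      (\<Sum>k<CARD('n). (detl (w(k := x)) / detl w) *\<^sub>R w k)"
    by (rule sum.reindex_bij_betw[OF cp_bij])
  ultimately show ?thesis by simp
qed


definition cns :: "'a \<Rightarrow> (nat \<Rightarrow> 'a) \<Rightarrow> nat \<Rightarrow> 'a" where
  "cns x f k = (if k = 0 then x else f (k - 1))"

lemma detl_rot:
  "k < CARD('n) \<Longrightarrow> detl (cns x (omit k (b::nat \<Rightarrow> real^'n::{finite,linorder}))) = (-1)^k * detl (b(k := x))"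
proof (induction k arbitrary: b)
  case 0
  have "cns x (omit 0 b) = b(0 := x)" by (auto simp: fun_eq_iff cns_def omit_def)
  then show ?case by simp
next
  case (Suc k)
  define b' where "b' = b(k := b (Suc k), Suc k := b k)"
  have e1: "cns x (omit (Suc k) b) = cns x (omit k b')"
    by (auto simp: fun_eq_iff cns_def omit_def b'_def)
  have e2: "b'(k := x) = (b(Suc k := x))(k := (b(Suc k := x)) (Suc k), Suc k := (b(Suc k := x)) k)"
    by (auto simp: fun_eq_iff b'_def)
  have "detl (cns x (omit (Suc k) b)) = (-1)^k * detl (b'(k := x))"
    unfolding e1 using Suc by (simp add: fun_upd_def)
  also have "detl (b'(k := x)) = - detl (b(Suc k := x))"
    unfolding e2 by (rule detl_swap) (use Suc in auto)
  finally show ?case by (simp add: fun_upd_def)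
qed

lemma sum_atMost_split0: "(\<Sum>i\<le>n. f i) = f 0 + (\<Sum>m<n. f (Suc m))"
  by (induction n) (auto simp: add_ac)

lemma prod_atMost_split0: "(\<Prod>i\<le>n. f i) = f 0 * (\<Prod>m<n. f (Suc m))"
  by (induction n) (auto simp: mult_ac)

definition dd :: "nat \<Rightarrow> (nat \<Rightarrow> real^'n::{finite,linorder}) \<Rightarrow> real" where
  "dd i u = (-1)^i * detl (omit i u)"

lemma dd0: "dd 0 u = detl (omit 0 u)" by (simp add: dd_def)

lemma omit_Suc_cns: "omit (Suc m) u = cns (u 0) (omit m (omit 0 u))"
  by (auto simp: fun_eq_iff cns_def omit_def)

lemma dd_Suc: "m < CARD('n) \<Longrightarrow> dd (Suc m) (u::nat \<Rightarrow> real^'n::{finite,linorder}) = - detl ((omit 0 u)(m := u 0))"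
  unfolding dd_def omit_Suc_cns by (simp add: detl_rot)

lemma detl_upd_self: assumes "j < CARD('n)" "m < CARD('n)" shows
    "detl ((B::nat \<Rightarrow> real^'n::{finite,linorder})(m := B j)) = (if j = m then detl B else 0)"
proof (cases "j = m")
  case True then show ?thesis by simp
next
  case False
  have "detl (B(m := B j)) = 0" using assms False by (intro detl_eq0[of m j]) auto
  then show ?thesis using False by simp
qed

lemma dd_relation:
  assumes "dd 0 (u::nat \<Rightarrow> real^'n::{finite,linorder}) \<noteq> 0"
  shows "(\<Sum>i\<le>CARD('n). dd i u *\<^sub>R u i) = 0"
proof -
  let ?B = "omit 0 u"
  have D: "detl ?B \<noteq> 0" using assms by (simp add: dd0)
  have sB: "?B m = u (Suc m)" for m by (simp add: omit_def)
  have "(\<Sum>i\<le>CARD('n). dd i u *\<^sub>R u i) = detl ?B *\<^sub>R u 0 - (\<Sum>m<CARD('n). detl (?B(m := u 0)) *\<^sub>R ?B m)"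
    unfolding sum_atMost_split0 by (simp add: dd0 dd_Suc sB sum_negf)
  also have "(\<Sum>m<CARD('n). detl (?B(m := u 0)) *\<^sub>R ?B m) = detl ?B *\<^sub>R (\<Sum>m<CARD('n). (detl (?B(m := u 0)) / detl ?B) *\<^sub>R ?B m)"
    using D by (simp add: scaleR_sum_right)
  also have "(\<Sum>m<CARD('n). (detl (?B(m := u 0)) / detl ?B) *\<^sub>R ?B m) = u 0"
    using detl_cramer[OF D, of "u 0"] by simp
  finally show ?thesis by simp
qed


lemma omit0_image_sub: "(omit 0 u) ` {..<n} \<subseteq> u ` {..n}"
  by (auto simp: omit_def)

lemma C_pos:
  fixes u :: "nat \<Rightarrow> real^'n::{finite,linorder}"
  assumes h: "(\<forall>i\<le>CARD('n). dd i u > 0) \<or> (\<forall>i\<le>CARD('n). dd i u < 0)"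
  shows "0 \<in> interior (convex hull (u ` {..CARD('n)}))"
proof -
  let ?N = "CARD('n)"
  let ?S = "u ` {..?N}"
  define T where "T = (\<Sum>i\<le>?N. dd i u)"
  have pos: "dd i u / T > 0" if "i \<le> ?N" for i
  proof -
    from h show ?thesis
    proof
      assume a: "\<forall>i\<le>?N. dd i u > 0"
      then have "T > 0" unfolding T_def by (intro sum_pos) auto
      then show ?thesis using a that by simp
    next
      assume a: "\<forall>i\<le>?N. dd i u < 0"
      then have "(\<Sum>i\<le>?N. - dd i u) > 0" by (intro sum_pos) auto
      then have "T < 0" unfolding T_def by (simp add: sum_negf)
      then show ?thesis using a that by (simp add: divide_neg_neg)
    qed
  qed
  have d0: "dd 0 u \<noteq> 0" using h by auto
  have rel: "(\<Sum>i\<le>?N. dd i u *\<^sub>R u i) = 0" by (rule dd_relation[OF d0])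
  have T0: "T \<noteq> 0" using pos[of 0] by auto
  define \<nu> where "\<nu> y = (\<Sum>i\<in>{i. i \<in> {..?N} \<and> u i = y}. dd i u / T)" for y
  have fin: "finite ?S" by simp
  have "0 \<in> {y. \<exists>v. (\<forall>x \<in> ?S. 0 < v x) \<and> sum v ?S = 1 \<and> sum (\<lambda>x. v x *\<^sub>R x) ?S = y}"
  proof (intro CollectI exI conjI ballI)
    fix x assume "x \<in> ?S"
    then obtain i where i: "i \<le> ?N" "u i = x" by auto
    show "0 < \<nu> x" unfolding \<nu>_def
      by (rule sum_pos2[of _ i]) (use i pos in \<open>auto intro: less_imp_le\<close>)
  next
    have "sum \<nu> ?S = (\<Sum>i\<le>?N. dd i u / T)"
      unfolding \<nu>_def by (rule sum.image_gen[symmetric]) simp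
    also have "\<dots> = 1" using T0 by (simp add: T_def sum_divide_distrib[symmetric])
    finally show "sum \<nu> ?S = 1" .
  next
    have "(\<Sum>i\<le>?N. (dd i u / T) *\<^sub>R u i) =
        (\<Sum>y\<in>?S. \<Sum>i\<in>{i. i \<in> {..?N} \<and> u i = y}. (dd i u / T) *\<^sub>R u i)"
      by (rule sum.image_gen) simp
    also have "\<dots> = (\<Sum>y\<in>?S. \<nu> y *\<^sub>R y)"
      unfolding \<nu>_def scaleR_sum_left by (intro sum.cong refl) auto
    finally have "(\<Sum>y\<in>?S. \<nu> y *\<^sub>R y) = (1/T) *\<^sub>R (\<Sum>i\<le>?N. dd i u *\<^sub>R u i)"
      by (simp add: scaleR_sum_right)
    then show "(\<Sum>y\<in>?S. \<nu> y *\<^sub>R y) = 0" using rel by simp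
  qed
  then have r: "0 \<in> rel_interior (convex hull ?S)"
    using explicit_subset_rel_interior_convex_hull_minimal[OF fin] by blast
  have "0 \<in> affine hull ?S"
    using r rel_interior_subset convex_hull_subset_affine_hull by blast
  then have ah: "affine hull ?S = span ?S" by (rule affine_hull_span_0)
  have "span ((omit 0 u) ` {..<?N}) = UNIV" using d0 by (simp add: dd0 detl_span)
  then have "span ?S = UNIV" using span_mono[OF omit0_image_sub[of u ?N]] by auto
  then have "affine hull (convex hull ?S) = UNIV" using ah by simp
  then show ?thesis using r rel_interior_interior by blast
qed


lemma C_neg:
  fixes u :: "nat \<Rightarrow> real^'n::{finite,linorder}"
  assumes h: "0 \<in> interior (convex hull (u ` {..CARD('n)}))"
  shows "(\<forall>i\<le>CARD('n). dd i u > 0) \<or> (\<forall>i\<le>CARD('n). dd i u < 0)"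
proof -
  let ?N = "CARD('n)"
  let ?S = "u ` {..?N}"
  let ?B = "omit 0 u"
  have sB: "?B m = u (Suc m)" for m by (simp add: omit_def)
  have fin: "finite ?S" by simp
  have cle: "card ?S \<le> Suc ?N" using card_image_le[of "{..?N}" u] by simp
  have "\<not> card ?S \<le> ?N"
  proof
    assume "card ?S \<le> ?N"
    then have "interior (convex hull ?S) = {}" using empty_interior_convex_hull[OF fin] by simp
    with h show False by simp
  qed
  then have cS: "card ?S = Suc ?N" using cle by simp
  then have inj: "inj_on u {..?N}" using inj_on_iff_eq_card[of "{..?N}" u] by simp
  have "\<not> affine_dependent ?S"
    using interior_convex_hull_eq_empty[of ?S] cS h by auto
  from interior_convex_hull_explicit_minimal[OF this] h cS
  obtain \<nu> where \<nu>: "\<forall>x\<in>?S. 0 < \<nu> x" "(\<Sum>x\<in>?S. \<nu> x *\<^sub>R x) = 0"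
    by auto
  define \<mu> where "\<mu> i = \<nu> (u i)" for i
  have \<mu>pos: "\<mu> i > 0" if "i \<le> ?N" for i using \<nu>(1) that by (auto simp: \<mu>_def)
  have "(\<Sum>i\<le>?N. \<mu> i *\<^sub>R u i) = 0"
    using \<nu>(2) unfolding sum.reindex[OF inj] by (simp add: \<mu>_def o_def)
  then have rel: "\<mu> 0 *\<^sub>R u 0 = (\<Sum>j<?N. (- \<mu> (Suc j)) *\<^sub>R ?B j)"
    unfolding sum_atMost_split0 by (simp add: sB sum_negf eq_neg_iff_add_eq_0)
  have key: "\<mu> 0 * dd (Suc m) u = \<mu> (Suc m) * dd 0 u" if m: "m < ?N" for m
  proof -
    have "\<mu> 0 * detl (?B(m := u 0)) = detl (?B(m := \<mu> 0 *\<^sub>R u 0))"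
      by (simp add: detl_smul m)
    also have "\<dots> = (\<Sum>j<?N. detl (?B(m := (- \<mu> (Suc j)) *\<^sub>R ?B j)))"
      unfolding rel by (rule detl_sum[OF m]) simp
    also have "\<dots> = (\<Sum>j<?N. (- \<mu> (Suc j)) * (if j = m then detl ?B else 0))"
      by (intro sum.cong refl) (simp only: detl_smul[OF m] detl_upd_self m lessThan_iff)
    also have "\<dots> = - \<mu> (Suc m) * detl ?B"
      using m by (simp add: if_distrib[of "\<lambda>x. _ * x"] cong: if_cong)
    finally show ?thesis by (simp add: dd_Suc m dd0)
  qed
  have d0: "dd 0 u \<noteq> 0"
  proof
    assume "dd 0 u = 0"
    then have nsp: "span (?B ` {..<?N}) \<noteq> UNIV" using detl_span[of ?B] by (simp add: dd0)
    let ?V = "span (?B ` {..<?N})"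
    have "u 0 = (1 / \<mu> 0) *\<^sub>R (\<Sum>j<?N. (- \<mu> (Suc j)) *\<^sub>R ?B j)"
      unfolding rel[symmetric] using \<mu>pos[of 0] by simp
    also have "\<dots> \<in> ?V"
      by (intro span_mul span_sum span_base) auto
    finally have u0: "u 0 \<in> ?V" .
    have "?S \<subseteq> ?V"
    proof
      fix x assume "x \<in> ?S"
      then obtain i where i: "i \<le> ?N" "x = u i" by auto
      show "x \<in> ?V"
      proof (cases i)
        case 0 then show ?thesis using u0 i by simp
      next
        case (Suc m)
        then have "x = ?B m" "m < ?N" using i sB by auto
        then show ?thesis by (intro span_base) auto
      qed
    qed
    then have "convex hull ?S \<subseteq> ?V"
      by (metis convex_hull_subset_span span_minimal subspace_span subset_trans)
    then have "interior (convex hull ?S) \<subseteq> interior ?V" by (rule interior_mono)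
    moreover have "dim ?V \<noteq> DIM((real,'n) vec)"
    proof
      assume "dim ?V = DIM((real,'n) vec)"
      then have "span ?V = UNIV" by (simp only: dim_eq_full)
      then show False using nsp by (simp only: span_span)
    qed
    then have "dim ?V < DIM((real,'n) vec)"
      using dim_subset_UNIV[of ?V] by linarith
    then have "interior ?V = {}" by (rule empty_interior_lowdim)
    ultimately show False using h by auto
  qed
  have rat: "dd i u = (\<mu> i / \<mu> 0) * dd 0 u" if "i \<le> ?N" for i
  proof (cases i)
    case 0 then show ?thesis using \<mu>pos[of 0] by simp
  next
    case (Suc m)
    then have m: "m < ?N" using that by simp
    have "\<mu> 0 \<noteq> 0" using \<mu>pos[of 0] by simp
    then show ?thesis using key[OF m] Suc by (simp add: divide_simps mult.commute)
  qed
  show ?thesis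
  proof (cases "dd 0 u > 0")
    case True
    have "dd i u > 0" if "i \<le> ?N" for i
    proof -
      have "\<mu> i / \<mu> 0 > 0" using \<mu>pos[OF that] \<mu>pos[of 0] by simp
      then show ?thesis unfolding rat[OF that] using True by (rule mult_pos_pos)
    qed
    then show ?thesis by blast
  next
    case False
    then have "dd 0 u < 0" using d0 by simp
    have "dd i u < 0" if "i \<le> ?N" for i
    proof -
      have "\<mu> i / \<mu> 0 > 0" using \<mu>pos[OF that] \<mu>pos[of 0] by simp
      then show ?thesis unfolding rat[OF that] using \<open>dd 0 u < 0\<close> by (rule mult_pos_neg)
    qed
    then show ?thesis by blast
  qed
qed


lemma S_eq: "S (v::nat \<Rightarrow> real^'n::{finite,linorder}) =
  (if (\<forall>i\<le>CARD('n). dd i v > 0) \<or> (\<forall>i\<le>CARD('n). dd i v < 0) then sgn (dd 0 v) else 0)"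
proof -
  have o: "omit 0 v = (\<lambda>k. v (Suc k))" by (simp add: fun_eq_iff omit_def)
  have "Or (\<lambda>k. v (Suc k)) = sgn (dd 0 v)"
    unfolding Or_detl dd0 o ..
  then show ?thesis unfolding S_def using C_pos[of v] C_neg[of v] by auto
qed

lemma prod_omit: "i \<le> n \<Longrightarrow> (\<Prod>k<n. omit i f k) * f i = (\<Prod>k\<le>n. (f k :: real))"
proof (induction n)
  case 0 then show ?case by (simp add: omit_def)
next
  case (Suc n)
  show ?case
  proof (cases "i \<le> n")
    case True
    then have "(\<Prod>k<Suc n. omit i f k) * f i = ((\<Prod>k<n. omit i f k) * f i) * f (Suc n)"
      by (simp add: omit_def mult_ac)
    also have "\<dots> = (\<Prod>k\<le>Suc n. f k)" using Suc.IH[OF True] by simp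
    finally show ?thesis .
  next
    case False
    then have i: "i = Suc n" using Suc.prems by simp
    have "(\<Prod>k<Suc n. omit i f k) = (\<Prod>k<Suc n. f k)"
      by (intro prod.cong refl) (simp add: omit_def i)
    then show ?thesis by (simp add: i lessThan_Suc_atMost)
  qed
qed

lemma dd_scale: "dd i (\<lambda>j. c j *\<^sub>R (u::nat \<Rightarrow> real^'n::{finite,linorder}) j) = (\<Prod>k<CARD('n). omit i c k) * dd i u"
proof -
  have "omit i (\<lambda>j. c j *\<^sub>R u j) = (\<lambda>k. omit i c k *\<^sub>R omit i u k)"
    by (auto simp: fun_eq_iff omit_def)
  then show ?thesis unfolding dd_def by (simp add: detl_scale_all)
qed

lemma pm1_sq: "t \<in> {-1, 1::real} \<Longrightarrow> t * t = 1" by auto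

lemma prod_pm1: "(\<forall>i\<in>A. f i \<in> {-1, 1::real}) \<Longrightarrow> prod f A \<in> {-1, 1}"
proof (induction A rule: infinite_finite_induct)
  case (insert x F) then show ?case by auto
qed auto

lemma pm_lemma: "P \<in> {-1, 1::real} \<Longrightarrow> \<sigma> \<in> {-1, 1} \<Longrightarrow> d \<noteq> 0 \<Longrightarrow> P * \<sigma> * d > 0 \<Longrightarrow> \<sigma> = P * sgn d"
  by (auto simp: sgn_real_def zero_less_mult_iff)

lemma pm_lemma2: "P \<in> {-1, 1::real} \<Longrightarrow> \<sigma> \<in> {-1, 1} \<Longrightarrow> d \<noteq> 0 \<Longrightarrow> P * \<sigma> * d < 0 \<Longrightarrow> \<sigma> = - P * sgn d"
  by (auto simp: sgn_real_def mult_less_0_iff)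


lemma sgn_times: "sgn (x::real) * x = \<bar>x\<bar>"
  by (cases "x > 0") (auto simp: sgn_real_def)

lemma Sm_formula:
  fixes u :: "nat \<Rightarrow> real^'n::{finite,linorder}"
  assumes ev: "even CARD('n)"
  shows "Sm u = (\<Prod>i\<le>CARD('n). sgn (dd i u)) / 2 ^ CARD('n)"
proof -
  let ?N = "CARD('n)"
  let ?A = "PiE {..?N} (\<lambda>_. {-1::real, 1})"
  let ?Q = "\<Prod>i\<le>?N. sgn (dd i u)"
  have sig: "\<sigma> i \<in> {-1,1}" if "\<sigma> \<in> ?A" "i \<le> ?N" for \<sigma> i
    using that by (auto simp: PiE_iff)
  have omitpm: "(\<Prod>k<?N. omit i \<sigma> k) = (\<Prod>j\<le>?N. \<sigma> j) * \<sigma> i" if "\<sigma> \<in> ?A" "i \<le> ?N" for \<sigma> i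
  proof -
    have s2: "\<sigma> i * \<sigma> i = 1" using sig[OF that] by (rule pm1_sq)
    have "(\<Prod>k<?N. omit i \<sigma> k) * \<sigma> i = (\<Prod>j\<le>?N. \<sigma> j)" by (rule prod_omit[OF that(2)])
    then have "(\<Prod>k<?N. omit i \<sigma> k) * (\<sigma> i * \<sigma> i) = (\<Prod>j\<le>?N. \<sigma> j) * \<sigma> i"
      by (simp add: mult.assoc[symmetric])
    then show ?thesis using s2 by simp
  qed
  have ddsig: "dd i (\<lambda>j. \<sigma> j *\<^sub>R u j) = (\<Prod>j\<le>?N. \<sigma> j) * \<sigma> i * dd i u" if "\<sigma> \<in> ?A" "i \<le> ?N" for \<sigma> i
    using dd_scale[of i \<sigma> u] omitpm[OF that] by simp
  have Ppm: "(\<Prod>j\<le>?N. \<sigma> j) \<in> {-1,1}" if "\<sigma> \<in> ?A" for \<sigma>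
    using sig[OF that] by (intro prod_pm1) auto
  show ?thesis
  proof (cases "\<exists>i\<le>?N. dd i u = 0")
    case True
    then obtain i0 where i0: "i0 \<le> ?N" "dd i0 u = 0" by auto
    have "S (\<lambda>j. \<sigma> j *\<^sub>R u j) = 0" if "\<sigma> \<in> ?A" for \<sigma>
    proof -
      have "dd i0 (\<lambda>j. \<sigma> j *\<^sub>R u j) = 0" using ddsig[OF that i0(1)] i0(2) by simp
      then show ?thesis unfolding S_eq using i0(1) by force
    qed
    then have "Sm u = 0" unfolding Sm_def by simp
    moreover have "?Q = 0" using i0 by (intro prod_zero[OF finite_atMost] bexI[of _ i0]) auto
    ultimately show ?thesis by simp
  next
    case False
    then have dnz: "dd i u \<noteq> 0" if "i \<le> ?N" for i using that by auto
    have spm: "sgn (dd i u) \<in> {-1,1}" if "i \<le> ?N" for i using dnz[OF that] by (auto simp: sgn_real_def)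
    have Qpm: "?Q \<in> {-1,1}" using spm by (intro prod_pm1) auto
    define sp where "sp = restrict (\<lambda>i. sgn (dd i u)) {..?N}"
    define sm where "sm = restrict (\<lambda>i. - sgn (dd i u)) {..?N}"
    have sp_in: "sp \<in> ?A" using spm by (auto simp: sp_def PiE_iff)
    have sm_in: "sm \<in> ?A" using spm by (force simp: sm_def PiE_iff)
    have ne: "sp \<noteq> sm"
    proof
      assume "sp = sm"
      then have "sp 0 = sm 0" by simp
      then show False using dnz[of 0] by (simp add: sp_def sm_def sgn_real_def split: if_splits)
    qed
    have eq_sp: "\<sigma> = sp" if "\<sigma> \<in> ?A" "\<forall>i\<le>?N. \<sigma> i = sgn (dd i u)" for \<sigma>
      using that by (auto simp: sp_def fun_eq_iff PiE_iff extensional_def)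
    have eq_sm: "\<sigma> = sm" if "\<sigma> \<in> ?A" "\<forall>i\<le>?N. \<sigma> i = - sgn (dd i u)" for \<sigma>
      using that by (auto simp: sm_def fun_eq_iff PiE_iff extensional_def)
    have trm: "S (\<lambda>j. \<sigma> j *\<^sub>R u j) = (if \<sigma> \<in> {sp, sm} then ?Q else 0)" if \<sigma>: "\<sigma> \<in> ?A" for \<sigma>
    proof -
      let ?P = "\<Prod>j\<le>?N. \<sigma> j"
      show ?thesis
      proof (cases "\<sigma> \<in> {sp, sm}")
        case True
        have PQ: "dd i (\<lambda>j. \<sigma> j *\<^sub>R u j) = ?Q * \<bar>dd i u\<bar>" if i: "i \<le> ?N" for i
        proof (cases "\<sigma> = sp")
          case True
          then have sj: "\<sigma> j = sgn (dd j u)" if "j \<le> ?N" for j using that by (simp add: sp_def)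
          then have "?P = ?Q" by (intro prod.cong) auto
          then show ?thesis unfolding ddsig[OF \<sigma> i] sj[OF i] by (simp add: mult.assoc sgn_times)
        next
          case False
          with \<open>\<sigma> \<in> {sp, sm}\<close> have "\<sigma> = sm" by simp
          then have sj: "\<sigma> j = - sgn (dd j u)" if "j \<le> ?N" for j using that by (simp add: sm_def)
          then have "?P = (\<Prod>j\<le>?N. - sgn (dd j u))" by (intro prod.cong) auto
          also have "\<dots> = - ?Q" using ev by (simp add: prod_uminus)
          finally show ?thesis unfolding ddsig[OF \<sigma> i] sj[OF i] by (simp add: mult.assoc sgn_times)
        qed
        have absp: "\<bar>dd i u\<bar> > 0" if "i \<le> ?N" for i using dnz[OF that] by simp
        have cond: "(\<forall>i\<le>?N. dd i (\<lambda>j. \<sigma> j *\<^sub>R u j) > 0) \<or> (\<forall>i\<le>?N. dd i (\<lambda>j. \<sigma> j *\<^sub>R u j) < 0)"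
          using Qpm absp unfolding PQ by (auto simp: PQ)
        have "sgn (dd 0 (\<lambda>j. \<sigma> j *\<^sub>R u j)) = ?Q"
          unfolding PQ[OF le0] using Qpm absp[OF le0] by (auto simp: sgn_mult)
        then show ?thesis unfolding S_eq using cond True by simp
      next
        case False
        have n1: "\<not> (\<forall>i\<le>?N. dd i (\<lambda>j. \<sigma> j *\<^sub>R u j) > 0)"
        proof
          assume a: "\<forall>i\<le>?N. dd i (\<lambda>j. \<sigma> j *\<^sub>R u j) > 0"
          have h: "\<sigma> i = ?P * sgn (dd i u)" if "i \<le> ?N" for i
            using a that ddsig[OF \<sigma> that] by (intro pm_lemma[OF Ppm[OF \<sigma>] sig[OF \<sigma> that] dnz[OF that]]) auto
          show False
          proof (cases "?P = 1")
            case True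
            then have "\<sigma> = sp" using h by (intro eq_sp[OF \<sigma>]) auto
            then show False using False by simp
          next
            case Pn: False
            then have "?P = -1" using Ppm[OF \<sigma>] by auto
            then have "\<sigma> = sm" using h by (intro eq_sm[OF \<sigma>]) auto
            then show False using False by simp
          qed
        qed
        have n2: "\<not> (\<forall>i\<le>?N. dd i (\<lambda>j. \<sigma> j *\<^sub>R u j) < 0)"
        proof
          assume a: "\<forall>i\<le>?N. dd i (\<lambda>j. \<sigma> j *\<^sub>R u j) < 0"
          have h: "\<sigma> i = - ?P * sgn (dd i u)" if "i \<le> ?N" for i
            using a that ddsig[OF \<sigma> that] by (intro pm_lemma2[OF Ppm[OF \<sigma>] sig[OF \<sigma> that] dnz[OF that]]) auto
          show False
          proof (cases "?P = 1")
            case True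
            then have "\<sigma> = sm" using h by (intro eq_sm[OF \<sigma>]) auto
            then show False using False by simp
          next
            case Pn: False
            then have "?P = -1" using Ppm[OF \<sigma>] by auto
            then have "\<sigma> = sp" using h by (intro eq_sp[OF \<sigma>]) auto
            then show False using False by simp
          qed
        qed
        show ?thesis unfolding S_eq using n1 n2 False by simp
      qed
    qed
    have "(\<Sum>\<sigma>\<in>?A. S (\<lambda>i. \<sigma> i *\<^sub>R u i)) = (\<Sum>\<sigma>\<in>?A. (if \<sigma> \<in> {sp, sm} then ?Q else 0))"
      by (intro sum.cong refl trm)
    also have "\<dots> = (\<Sum>\<sigma>\<in>?A \<inter> {sp, sm}. ?Q)"
      by (rule sum.inter_restrict[symmetric]) (simp add: finite_PiE)
    also have "?A \<inter> {sp, sm} = {sp, sm}" using sp_in sm_in by auto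
    also have "(\<Sum>\<sigma>\<in>{sp, sm}. ?Q) = 2 * ?Q" using ne by simp
    finally show ?thesis unfolding Sm_def by simp
  qed
qed


lemma sgn_prod_real: "sgn (prod f A) = (\<Prod>x\<in>A. sgn (f x :: real))"
  by (induction A rule: infinite_finite_induct) (auto simp: sgn_mult)

lemma pm1_pow_even: "t \<in> {-1, 1::real} \<Longrightarrow> even m \<Longrightarrow> t ^ m = 1"
  by auto

lemma omit_prod_pm:
  assumes "\<forall>j\<le>n. t j \<in> {-1, 1::real}" "i \<le> n"
  shows "(\<Prod>k<n. omit i t k) = (\<Prod>j\<le>n. t j) * t i"
proof -
  have s2: "t i * t i = 1" using assms by (intro pm1_sq) auto
  have "(\<Prod>k<n. omit i t k) * t i = (\<Prod>j\<le>n. t j)" by (rule prod_omit[OF assms(2)])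
  then have "(\<Prod>k<n. omit i t k) * (t i * t i) = (\<Prod>j\<le>n. t j) * t i"
    by (simp add: mult.assoc[symmetric])
  then show ?thesis using s2 by simp
qed

lemma part1:
  fixes v :: "nat \<Rightarrow> real^'n::{finite,linorder}"
  assumes ev: "even CARD('n)" and c: "\<forall>i\<le>CARD('n). c i \<noteq> 0"
  shows "Sm (\<lambda>i. c i *\<^sub>R v i) = Sm v"
proof -
  let ?N = "CARD('n)"
  define t where "t j = sgn (c j)" for j
  have tpm: "\<forall>j\<le>?N. t j \<in> {-1,1}" using c by (auto simp: t_def sgn_real_def)
  define P where "P = (\<Prod>j\<le>?N. t j)"
  have Ppm: "P \<in> {-1,1}" unfolding P_def using tpm by (intro prod_pm1) auto
  have "sgn (dd i (\<lambda>j. c j *\<^sub>R v j)) = (P * t i) * sgn (dd i v)" if "i \<le> ?N" for i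
  proof -
    have "sgn (\<Prod>k<?N. omit i c k) = (\<Prod>k<?N. omit i t k)"
      unfolding sgn_prod_real by (intro prod.cong refl) (simp add: t_def omit_def)
    also have "\<dots> = P * t i" unfolding P_def by (rule omit_prod_pm[OF tpm that])
    finally show ?thesis unfolding dd_scale by (simp add: sgn_mult)
  qed
  then have "(\<Prod>i\<le>?N. sgn (dd i (\<lambda>j. c j *\<^sub>R v j))) = (\<Prod>i\<le>?N. (P * t i) * sgn (dd i v))"
    by (intro prod.cong) auto
  also have "\<dots> = (P ^ Suc ?N * P) * (\<Prod>i\<le>?N. sgn (dd i v))"
    by (simp add: prod.distrib P_def)
  also have "P ^ Suc ?N * P = 1"
  proof -
    have "P ^ Suc ?N * P = P ^ (?N + 2)" by (simp add: power_add)
    also have "\<dots> = 1" using Ppm ev by (intro pm1_pow_even) auto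
    finally show ?thesis .
  qed
  finally show ?thesis unfolding Sm_formula[OF ev] by simp
qed

lemma part2:
  fixes v :: "nat \<Rightarrow> real^'n::{finite,linorder}" and g :: "real^'n::{finite,linorder}^'n::{finite,linorder}"
  assumes ev: "even CARD('n)" and g: "invertible g"
  shows "Sm (\<lambda>i. g *v v i) = sgn (det g) * Sm v"
proof -
  let ?N = "CARD('n)"
  have dg: "sgn (det g) \<in> {-1,1}" using g invertible_det_nz[of g] by (auto simp: sgn_real_def)
  have "dd i (\<lambda>j. g *v v j) = det g * dd i v" for i
  proof -
    have "omit i (\<lambda>j. g *v v j) = (\<lambda>k. g *v omit i v k)" by (auto simp: fun_eq_iff omit_def)
    then show ?thesis unfolding dd_def by (simp add: detl_mult)
  qed
  then have "(\<Prod>i\<le>?N. sgn (dd i (\<lambda>j. g *v v j))) = sgn (det g) ^ Suc ?N * (\<Prod>i\<le>?N. sgn (dd i v))"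
    by (simp add: sgn_mult prod.distrib)
  also have "sgn (det g) ^ Suc ?N = sgn (det g)"
    using pm1_pow_even[OF dg ev] by simp
  finally show ?thesis unfolding Sm_formula[OF ev] by simp
qed

definition cr :: "(nat \<Rightarrow> real) \<Rightarrow> (nat \<Rightarrow> real) \<Rightarrow> nat \<Rightarrow> nat \<Rightarrow> real" where
  "cr p q i j = p i * q j - p j * q i"

lemma cr_anti: "cr p q j i = - cr p q i j" by (simp add: cr_def)
lemma cr_self: "cr p q i i = 0" by (simp add: cr_def)

lemma cr_trans:
  assumes q: "q i \<ge> 0" "q j \<ge> 0" "q k \<ge> 0"
    and h1: "cr p q k i > 0" and h2: "cr p q i j > 0" and nz: "cr p q k j \<noteq> 0"
  shows "cr p q k j > 0"
proof (rule ccontr)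
  assume "\<not> cr p q k j > 0"
  then have h3: "cr p q j k > 0" using nz cr_anti[of p q k j] by linarith
  have id: "cr p q k i * q j + cr p q i j * q k + cr p q j k * q i = 0"
    by (simp add: cr_def algebra_simps)
  have a: "cr p q k i * q j \<ge> 0" "cr p q i j * q k \<ge> 0" "cr p q j k * q i \<ge> 0"
    using q h1 h2 h3 by simp_all
  then have "cr p q k i * q j = 0" "cr p q i j * q k = 0" "cr p q j k * q i = 0"
    using id by linarith+
  then have "q j = 0" "q k = 0" "q i = 0" using h1 h2 h3 by simp_all
  then have "cr p q k i = 0" by (simp add: cr_def)
  with h1 show False by simp
qed

lemma sum_alt_even: "(\<Sum>k<2*m. (-1::real)^k) = 0"
  by (induction m) (auto simp: algebra_simps)

lemma CL_upper:
  fixes p q :: "nat \<Rightarrow> real"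
  assumes ev: "even M" and q: "\<forall>i<M. q i \<ge> 0"
    and nz: "\<forall>i<M. \<forall>j<M. i \<noteq> j \<longrightarrow> cr p q i j \<noteq> 0"
  shows "(\<Sum>i<M. \<Prod>j\<in>{..<M} - {i}. sgn (cr p q i j)) = 0"
proof -
  define L where "L i = {j\<in>{..<M}. cr p q i j < 0}" for i
  define r where "r i = card (L i)" for i
  have prodr: "(\<Prod>j\<in>{..<M} - {i}. sgn (cr p q i j)) = (-1)^(r i)" if i: "i < M" for i
  proof -
    have "(\<Prod>j\<in>{..<M} - {i}. sgn (cr p q i j)) = (\<Prod>j\<in>{..<M} - {i}. if j \<in> L i then -1 else 1)"
      using nz i by (intro prod.cong refl) (auto simp: L_def sgn_real_def)
    also have "\<dots> = (-1) ^ card (({..<M} - {i}) \<inter> L i)"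
      by (simp add: prod.If_cases)
    also have "({..<M} - {i}) \<inter> L i = L i" by (auto simp: L_def cr_self)
    finally show ?thesis by (simp add: r_def)
  qed
  have sub: "L i \<subset> L j" if ij: "i < M" "j < M" "cr p q i j > 0" for i j
  proof
    show "L i \<subseteq> L j"
    proof
      fix k assume "k \<in> L i"
      then have k: "k < M" "cr p q i k < 0" by (auto simp: L_def)
      then have "cr p q k i > 0" using cr_anti[of p q k i] by simp
      moreover have "k \<noteq> j" using k ij by auto
      moreover have "q i \<ge> 0" "q j \<ge> 0" "q k \<ge> 0" using q k ij by auto
      moreover have "cr p q k j \<noteq> 0" using nz k ij \<open>k \<noteq> j\<close> by auto
      ultimately have "cr p q k j > 0" using cr_trans[of q i j k p] ij(3) by blast
      then show "k \<in> L j" using k cr_anti[of p q k j] by (simp add: L_def)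
    qed
    have "i \<in> L j" using ij cr_anti[of p q i j] by (simp add: L_def)
    moreover have "i \<notin> L i" by (simp add: L_def cr_self)
    ultimately show "L i \<noteq> L j" by auto
  qed
  have finL: "finite (L i)" for i by (simp add: L_def)
  have inj: "inj_on r {..<M}"
  proof
    fix i j assume i: "i \<in> {..<M}" and j: "j \<in> {..<M}" and e: "r i = r j"
    show "i = j"
    proof (rule ccontr)
      assume "i \<noteq> j"
      then have "cr p q i j > 0 \<or> cr p q j i > 0" using nz i j cr_anti[of p q i j] by force
      then show False
      proof
        assume "cr p q i j > 0"
        then have "r i < r j" using sub i j finL unfolding r_def by (intro psubset_card_mono) auto
        with e show False by simp
      next
        assume "cr p q j i > 0"
        then have "r j < r i" using sub i j finL unfolding r_def by (intro psubset_card_mono) auto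
        with e show False by simp
      qed
    qed
  qed
  have rlt: "r i < M" if "i < M" for i
  proof -
    have "L i \<subseteq> {..<M} - {i}" by (auto simp: L_def cr_self)
    then have "r i \<le> card ({..<M} - {i})" unfolding r_def by (intro card_mono) auto
    also have "\<dots> < M" using that by simp
    finally show ?thesis .
  qed
  have img: "r ` {..<M} = {..<M}"
  proof -
    have "r ` {..<M} \<subseteq> {..<M}" using rlt by auto
    moreover have "card (r ` {..<M}) = M" using card_image[OF inj] by simp
    ultimately show ?thesis by (metis card_lessThan card_subset_eq finite_lessThan)
  qed
  have bij: "bij_betw r {..<M} {..<M}" using inj img by (simp add: bij_betw_def)
  have "(\<Sum>i<M. \<Prod>j\<in>{..<M} - {i}. sgn (cr p q i j)) = (\<Sum>i<M. (-1::real)^(r i))"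
    using prodr by (intro sum.cong) auto
  also have "\<dots> = (\<Sum>k<M. (-1::real)^k)" by (rule sum.reindex_bij_betw[OF bij])
  also have "\<dots> = 0" using ev sum_alt_even by (metis evenE)
  finally show ?thesis .
qed


lemma CL:
  fixes p q :: "nat \<Rightarrow> real"
  assumes ev: "even M"
    and nz: "\<forall>i<M. \<forall>j<M. i \<noteq> j \<longrightarrow> cr p q i j \<noteq> 0"
  shows "(\<Sum>i<M. \<Prod>j\<in>{..<M} - {i}. sgn (cr p q i j)) = 0"
proof -
  define \<tau> where "\<tau> i = (if q i \<ge> 0 then 1 else -1::real)" for i
  define p' where "p' i = \<tau> i * p i" for i
  define q' where "q' i = \<tau> i * q i" for i
  have \<tau>pm: "\<tau> i \<in> {-1,1}" for i by (simp add: \<tau>_def)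
  have \<tau>sq: "\<tau> i * \<tau> i = 1" for i by (simp add: \<tau>_def)
  have crt: "cr p' q' i j = \<tau> i * \<tau> j * cr p q i j" for i j
    by (simp add: cr_def p'_def q'_def algebra_simps)
  have q': "\<forall>i<M. q' i \<ge> 0" by (simp add: q'_def \<tau>_def)
  have nz': "\<forall>i<M. \<forall>j<M. i \<noteq> j \<longrightarrow> cr p' q' i j \<noteq> 0"
    using nz by (simp add: crt \<tau>_def)
  define T where "T = (\<Prod>j<M. \<tau> j)"
  have sg: "sgn (cr p q i j) = \<tau> i * \<tau> j * sgn (cr p' q' i j)" for i j
  proof -
    have "\<tau> i * \<tau> j * sgn (cr p' q' i j) = (\<tau> i * \<tau> i) * (\<tau> j * \<tau> j) * sgn (cr p q i j)"
      unfolding crt sgn_mult using \<tau>pm[of i] \<tau>pm[of j] by (auto simp: sgn_real_def)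
    then show ?thesis by (simp add: \<tau>sq)
  qed
  have trm: "(\<Prod>j\<in>{..<M} - {i}. sgn (cr p q i j)) = T * (\<Prod>j\<in>{..<M} - {i}. sgn (cr p' q' i j))"
    if i: "i < M" for i
  proof -
    have "(\<Prod>j\<in>{..<M} - {i}. sgn (cr p q i j)) =
        \<tau> i ^ card ({..<M} - {i}) * (\<Prod>j\<in>{..<M} - {i}. \<tau> j) * (\<Prod>j\<in>{..<M} - {i}. sgn (cr p' q' i j))"
      unfolding sg by (simp add: prod.distrib)
    also have "(\<Prod>j\<in>{..<M} - {i}. \<tau> j) = T * \<tau> i"
    proof -
      have "T = \<tau> i * (\<Prod>j\<in>{..<M} - {i}. \<tau> j)" unfolding T_def using i by (intro prod.remove) auto
      then have "T * \<tau> i = (\<tau> i * \<tau> i) * (\<Prod>j\<in>{..<M} - {i}. \<tau> j)" by (simp add: mult_ac)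
      then show ?thesis by (simp add: \<tau>sq)
    qed
    also have "\<tau> i ^ card ({..<M} - {i}) * (T * \<tau> i) = T * \<tau> i ^ M"
    proof -
      have c: "card ({..<M} - {i}) = M - 1" using i by simp
      have "\<tau> i ^ (M - 1) * \<tau> i = \<tau> i ^ M" using i by (metis power_minus_mult gr_zeroI less_nat_zero_code)
      then show ?thesis unfolding c by (simp add: mult_ac)
    qed
    also have "\<tau> i ^ M = 1" using \<tau>pm[of i] ev by auto
    finally show ?thesis by simp
  qed
  have "(\<Sum>i<M. \<Prod>j\<in>{..<M} - {i}. sgn (cr p q i j)) = T * (\<Sum>i<M. \<Prod>j\<in>{..<M} - {i}. sgn (cr p' q' i j))"
    unfolding sum_distrib_left using trm by (intro sum.cong) auto
  also have "\<dots> = 0" using CL_upper[OF ev q' nz'] by simp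
  finally show ?thesis .
qed


lemma sum_two: "a \<noteq> b \<Longrightarrow> a \<in> X \<Longrightarrow> b \<in> X \<Longrightarrow> finite X \<Longrightarrow>
  (\<Sum>m\<in>X. if m = a then A else if m = b then Bv else 0) = A + (Bv::real)"
proof -
  assume ab: "a \<noteq> b" "a \<in> X" "b \<in> X" "finite X"
  have "(\<Sum>m\<in>X. if m = a then A else if m = b then Bv else 0) = (\<Sum>m\<in>X. (if m = a then A else 0) + (if m = b then Bv else 0))"
    using ab by (intro sum.cong) auto
  also have "\<dots> = A + Bv" using ab by (simp add: sum.distrib)
  finally show ?thesis .
qed

lemma detl_DE:
  fixes B :: "nat \<Rightarrow> real^'n::{finite,linorder}"
  assumes ab: "a \<noteq> b" "a < CARD('n)" "b < CARD('n)" and D: "detl B \<noteq> 0"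
  shows "detl (B(a := x, b := y)) = (detl (B(a := x)) * detl (B(b := y)) - detl (B(b := x)) * detl (B(a := y))) / detl B"
proof -
  let ?N = "CARD('n)"
  let ?D = "detl B"
  have Z: "detl (B(a := x, b := B a)) = - detl (B(b := x))"
  proof -
    have e: "B(a := x, b := B a) = (B(b := B a))(a := x)" using ab by (auto simp: fun_eq_iff)
    have "detl ((B(b := B a))(a := x)) = detl ((B(b := B a))(a := (\<Sum>l<?N. (detl (B(l := x)) / ?D) *\<^sub>R B l)))"
      using detl_cramer[OF D, of x] by simp
    also have "\<dots> = (\<Sum>l<?N. (detl (B(l := x)) / ?D) * detl ((B(b := B a))(a := B l)))"
      by (simp add: detl_sum detl_smul ab)
    also have "\<dots> = (\<Sum>l<?N. if l = b then - detl (B(b := x)) else if l = a then 0 else 0)"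
    proof (intro sum.cong refl)
      fix l assume l: "l \<in> {..<?N}"
      show "(detl (B(l := x)) / ?D) * detl ((B(b := B a))(a := B l)) = (if l = b then - detl (B(b := x)) else if l = a then 0 else 0)"
      proof (cases "l = b")
        case True
        have "(B(b := B a))(a := B b) = B(a := B b, b := B a)" using ab by (auto simp: fun_eq_iff)
        then have "detl ((B(b := B a))(a := B l)) = - ?D" using True ab detl_swap[of a b B] by simp
        then show ?thesis using True D by simp
      next
        case False
        have "detl ((B(b := B a))(a := B l)) = 0"
        proof (cases "l = a")
          case True
          then show ?thesis using ab by (intro detl_eq0[of a b]) auto
        next
          case la: False
          then show ?thesis using ab l False by (intro detl_eq0[of a l]) auto
        qed
        then show ?thesis using False by simp
      qed
    qed
    also have "\<dots> = - detl (B(b := x))" using sum_two[of b a "{..<?N}" "- detl (B(b := x))" 0] ab by simp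
    finally show ?thesis unfolding e .
  qed
  have "detl (B(a := x, b := y)) = detl (B(a := x, b := (\<Sum>m<?N. (detl (B(m := y)) / ?D) *\<^sub>R B m)))"
    using detl_cramer[OF D, of y] by simp
  also have "\<dots> = (\<Sum>m<?N. (detl (B(m := y)) / ?D) * detl (B(a := x, b := B m)))"
    by (simp add: detl_sum detl_smul ab)
  also have "\<dots> = (\<Sum>m<?N. if m = a then (detl (B(a := y)) / ?D) * (- detl (B(b := x)))
        else if m = b then (detl (B(b := y)) / ?D) * detl (B(a := x)) else 0)"
  proof (intro sum.cong refl)
    fix m assume m: "m \<in> {..<?N}"
    consider "m = a" | "m = b" | "m \<noteq> a" "m \<noteq> b" by blast
    then show "(detl (B(m := y)) / ?D) * detl (B(a := x, b := B m)) = (if m = a then (detl (B(a := y)) / ?D) * (- detl (B(b := x)))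
        else if m = b then (detl (B(b := y)) / ?D) * detl (B(a := x)) else 0)"
    proof cases
      case 1 then show ?thesis using Z by simp
    next
      case 2
      have "B(a := x, b := B b) = B(a := x)" using ab by (auto simp: fun_eq_iff)
      then show ?thesis using 2 ab by simp
    next
      case 3
      have "detl (B(a := x, b := B m)) = 0" using 3 ab m by (intro detl_eq0[of m b]) auto
      then show ?thesis using 3 by simp
    qed
  qed
  also have "\<dots> = (detl (B(a := y)) / ?D) * (- detl (B(b := x))) + (detl (B(b := y)) / ?D) * detl (B(a := x))"
    using ab by (intro sum_two) auto
  also have "\<dots> = (detl (B(a := x)) * detl (B(b := y)) - detl (B(b := x)) * detl (B(a := y))) / ?D"
    using D by (simp add: divide_simps)
  finally show ?thesis .
qed


definition Bw :: "(nat \<Rightarrow> 'a) \<Rightarrow> nat \<Rightarrow> 'a" where "Bw w m = w (m + 2)"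

lemma fe_a: "omit 0 (omit (Suc 0) w) = Bw w"
  by (auto simp: fun_eq_iff omit_def Bw_def)

lemma fe_b: "2 \<le> j \<Longrightarrow> omit 0 (omit j w) = cns (w 1) (omit (j-2) (Bw w))"
  by (auto simp: fun_eq_iff omit_def Bw_def cns_def)

lemma fe_c: "2 \<le> j \<Longrightarrow> omit 1 (omit j w) = cns (w 0) (omit (j-2) (Bw w))"
  by (auto simp: fun_eq_iff omit_def Bw_def cns_def)

lemma nat_cases3: "((m::nat) = 0 \<Longrightarrow> P) \<Longrightarrow> (m = 1 \<Longrightarrow> P) \<Longrightarrow> (\<And>k. m = k + 2 \<Longrightarrow> P) \<Longrightarrow> P"
proof -
  assume a: "m = 0 \<Longrightarrow> P" "m = 1 \<Longrightarrow> P" "\<And>k. m = k + 2 \<Longrightarrow> P"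
  show P
  proof (cases "m \<ge> 2")
    case True
    then have "m = (m - 2) + 2" by simp
    then show P by (rule a(3))
  next
    case False
    then have "m = 0 \<or> m = 1" by linarith
    then show P using a(1,2) by blast
  qed
qed

lemma fe_d: "2 \<le> i \<Longrightarrow> i < j \<Longrightarrow> omit i (omit j w) = cns (w 0) (omit (i-1) (cns (w 1) (omit (j-2) (Bw w))))"
  apply (rule ext)
  subgoal for m by (rule nat_cases3[of m]) (auto simp: omit_def Bw_def cns_def)
  done

lemma fe_e: "2 \<le> i \<Longrightarrow> i < j \<Longrightarrow> (cns (w 1) (omit (j-2) (Bw w)))(i-1 := w 0) = cns (w 1) (omit (j-2) ((Bw w)(i-2 := w 0)))"
  apply (rule ext)
  subgoal for m by (rule nat_cases3[of m]) (auto simp: omit_def Bw_def cns_def intro!: arg_cong[where f=w])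
  done

lemma omit_comm: "i \<le> k \<Longrightarrow> omit k (omit i w) = omit i (omit (Suc k) w)"
  by (auto simp: fun_eq_iff omit_def)


definition gp :: "(nat \<Rightarrow> real^'n::{finite,linorder}) \<Rightarrow> nat \<Rightarrow> real" where
  "gp w k = (if k = 0 then 1 else if k = 1 then 0 else - detl ((Bw w)(k-2 := w 0)) / detl (Bw w))"
definition gq :: "(nat \<Rightarrow> real^'n::{finite,linorder}) \<Rightarrow> nat \<Rightarrow> real" where
  "gq w k = (if k = 0 then 0 else if k = 1 then 1 else - detl ((Bw w)(k-2 := w 1)) / detl (Bw w))"

lemma E_formula:
  fixes w :: "nat \<Rightarrow> real^'n::{finite,linorder}"
  assumes D: "detl (Bw w) \<noteq> 0" and ij: "i < j" "j \<le> CARD('n) + 1"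
  shows "detl (omit i (omit j w)) = -((-1)^(i+j)) * cr (gp w) (gq w) i j * detl (Bw w)"
proof -
  let ?N = "CARD('n)"
  let ?B = "Bw w"
  let ?D = "detl ?B"
  consider "i = 0" "j = 1" | "i = 0" "j \<ge> 2" | "i = 1" "j \<ge> 2" | "i \<ge> 2" using ij by linarith
  then show ?thesis
  proof cases
    case 1
    then show ?thesis by (simp add: fe_a cr_def gp_def gq_def)
  next
    case 2
    define b where "b = j - 2"
    have b: "j = b + 2" using 2 by (simp add: b_def)
    have bN: "b < ?N" using b ij by simp
    have "detl (omit i (omit j w)) = (-1)^b * detl (?B(b := w 1))"
      using 2 b bN fe_b[of j w] by (simp add: detl_rot)
    moreover have "cr (gp w) (gq w) i j = - detl (?B(b := w 1)) / ?D"
      using 2 b by (simp add: cr_def gp_def gq_def)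
    ultimately show ?thesis using 2 b D by (simp add: power_add)
  next
    case 3
    define b where "b = j - 2"
    have b: "j = b + 2" using 3 by (simp add: b_def)
    have bN: "b < ?N" using b ij by simp
    have "detl (omit i (omit j w)) = (-1)^b * detl (?B(b := w 0))"
      using 3 b bN fe_c[of j w] by (simp add: detl_rot)
    moreover have "cr (gp w) (gq w) i j = detl (?B(b := w 0)) / ?D"
      using 3 b by (simp add: cr_def gp_def gq_def)
    ultimately show ?thesis using 3 b D by (simp add: power_add)
  next
    case 4
    define a where "a = i - 2"
    define b where "b = j - 2"
    have a: "i = a + 2" using 4 by (simp add: a_def)
    have b: "j = b + 2" using 4 ij by (simp add: b_def)
    have ab: "a < b" "a < ?N" "b < ?N" "a \<noteq> b" using a b ij by auto
    have i1: "i - 1 = Suc a" "i - 1 < ?N" using a ab by auto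
    have "detl (omit i (omit j w)) = (-1)^(Suc a) * detl ((cns (w 1) (omit b ?B))(Suc a := w 0))"
      unfolding fe_d[OF 4 ij(1)] using i1 b by (simp add: detl_rot)
    also have "(cns (w 1) (omit b ?B))(Suc a := w 0) = cns (w 1) (omit b (?B(a := w 0)))"
      using fe_e[OF 4 ij(1), of w] a b by simp
    also have "detl (cns (w 1) (omit b (?B(a := w 0)))) = (-1)^b * detl (?B(a := w 0, b := w 1))"
      using ab by (simp add: detl_rot)
    also have "detl (?B(a := w 0, b := w 1)) = (detl (?B(a := w 0)) * detl (?B(b := w 1)) - detl (?B(b := w 0)) * detl (?B(a := w 1))) / ?D"
      using ab D by (intro detl_DE) auto
    finally have L: "detl (omit i (omit j w)) = (-1)^(Suc a) * ((-1)^b * ((detl (?B(a := w 0)) * detl (?B(b := w 1)) - detl (?B(b := w 0)) * detl (?B(a := w 1))) / ?D))" .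
    define X where "X = detl (?B(a := w 0)) * detl (?B(b := w 1)) - detl (?B(b := w 0)) * detl (?B(a := w 1))"
    have C: "cr (gp w) (gq w) i j = X / (?D * ?D)"
      using a b D by (simp add: cr_def gp_def gq_def X_def field_simps)
    have s: "-((-1::real)^(i+j)) = (-1)^(Suc a) * (-1)^b" using a b by (simp add: power_add)
    have x: "X / (?D * ?D) * ?D = X / ?D" using D by simp
    show ?thesis unfolding L C s X_def[symmetric] mult.assoc x ..
  qed
qed


definition ix2 :: "nat \<Rightarrow> nat \<Rightarrow> nat \<Rightarrow> nat" where
  "ix2 i j k = (if k < i then k else if k + 1 < j then k + 1 else k + 2)"

lemma omit2_ix: "i < j \<Longrightarrow> omit i (omit j w) k = w (ix2 i j k)"
  by (auto simp: omit_def ix2_def)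

lemma ix2_image: assumes "i < j" "j \<le> n + 1" shows "ix2 i j ` {..<n} = {..n+1} - {i, j}"
proof
  show "ix2 i j ` {..<n} \<subseteq> {..n+1} - {i, j}" using assms by (auto simp: ix2_def)
  show "{..n+1} - {i, j} \<subseteq> ix2 i j ` {..<n}"
  proof
    fix m assume m: "m \<in> {..n+1} - {i, j}"
    consider "m < i" | "i < m" "m < j" | "j < m" using m by force
    then show "m \<in> ix2 i j ` {..<n}"
    proof cases
      case 1
      then have "ix2 i j m = m" "m < n" using assms by (auto simp: ix2_def)
      then show ?thesis by (metis imageI lessThan_iff)
    next
      case 2
      then have "ix2 i j (m - 1) = m" "m - 1 < n" using assms by (auto simp: ix2_def)
      then show ?thesis by (metis imageI lessThan_iff)
    next
      case 3
      then have "ix2 i j (m - 2) = m" "m - 2 < n" using assms m by (auto simp: ix2_def)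
      then show ?thesis by (metis imageI lessThan_iff)
    qed
  qed
qed

lemma hs_detl:
  fixes w :: "nat \<Rightarrow> real^'n::{finite,linorder}"
  assumes hs: "hered_spanning w" and ij: "i < j" "j \<le> CARD('n) + 1"
  shows "detl (omit i (omit j w)) \<noteq> 0"
proof -
  let ?N = "CARD('n)"
  let ?I = "{..?N+1} - {i, j}"
  have cI: "card ?I = ?N"
  proof -
    have "card ?I = card {..?N+1} - card {i, j}" using ij by (intro card_Diff_subset) auto
    then show ?thesis using ij by simp
  qed
  have "span (w ` ?I) = UNIV" using hs cI unfolding hered_spanning_def by auto
  moreover have "(omit i (omit j w)) ` {..<?N} = w ` ?I"
  proof -
    have "(omit i (omit j w)) ` {..<?N} = w ` (ix2 i j ` {..<?N})"
      using ij by (auto simp: omit2_ix image_image)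
    then show ?thesis using ix2_image[OF ij] by simp
  qed
  ultimately show ?thesis using detl_span by metis
qed

lemma dd_omit:
  fixes w :: "nat \<Rightarrow> real^'n::{finite,linorder}"
  assumes D: "detl (Bw w) \<noteq> 0" and i: "i \<le> CARD('n) + 1" and k: "k \<le> CARD('n)"
  shows "dd k (omit i w) = (-1)^i * cr (gp w) (gq w) i (if k < i then k else Suc k) * detl (Bw w)"
proof (cases "k < i")
  case True
  have "dd k (omit i w) = (-1)^k * (-((-1)^(k+i)) * cr (gp w) (gq w) k i * detl (Bw w))"
    unfolding dd_def using E_formula[OF D True] i by simp
  also have "\<dots> = (-1)^i * cr (gp w) (gq w) i k * detl (Bw w)"
    by (simp add: power_add cr_anti[of _ _ i k])
  finally show ?thesis using True by simp
next
  case False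
  have "dd k (omit i w) = (-1)^k * detl (omit i (omit (Suc k) w))"
    unfolding dd_def using False by (simp add: omit_comm)
  also have "\<dots> = (-1)^k * (-((-1)^(i + Suc k)) * cr (gp w) (gq w) i (Suc k) * detl (Bw w))"
    using E_formula[OF D, of i "Suc k"] False k by simp
  also have "\<dots> = (-1)^i * cr (gp w) (gq w) i (Suc k) * detl (Bw w)"
    by (simp add: power_add)
  finally show ?thesis using False by simp
qed


lemma sgn_m1pow: "sgn ((-1::real)^i) = (-1)^i"
  by (cases "even i") auto

lemma e_bij: assumes "i \<le> n + 1"
  shows "bij_betw (\<lambda>k. if k < i then k else Suc k) {..n} ({..<Suc (Suc n)} - {i})"
proof -
  let ?e = "\<lambda>k::nat. if k < i then k else Suc k"
  have inj: "inj_on ?e {..n}" by (rule inj_onI) (auto split: if_splits)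
  have "?e ` {..n} = {..<Suc (Suc n)} - {i}"
  proof
    show "?e ` {..n} \<subseteq> {..<Suc (Suc n)} - {i}" using assms by auto
    show "{..<Suc (Suc n)} - {i} \<subseteq> ?e ` {..n}"
    proof
      fix j assume j: "j \<in> {..<Suc (Suc n)} - {i}"
      show "j \<in> ?e ` {..n}"
      proof (cases "j < i")
        case True
        then have h: "j = ?e j" "j \<in> {..n}" using assms by auto
        show ?thesis by (rule image_eqI[where f="?e", OF h])
      next
        case False
        then have h: "j = ?e (j - 1)" "j - 1 \<in> {..n}" using j by auto
        show ?thesis by (rule image_eqI[where f="?e", OF h])
      qed
    qed
  qed
  then show ?thesis using inj by (simp add: bij_betw_def)
qed

lemma part3:
  fixes w :: "nat \<Rightarrow> real^'n::{finite,linorder}"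
  assumes ev: "even CARD('n)" and hs: "hered_spanning w"
  shows "cobdry Sm w = 0"
proof -
  let ?N = "CARD('n)"
  let ?D = "detl (Bw w)"
  let ?c = "cr (gp w) (gq w)"
  have D: "?D \<noteq> 0" using hs_detl[OF hs, of 0 1] fe_a[of w] by simp
  have sD: "sgn ?D \<in> {-1,1}" using D by (auto simp: sgn_real_def)
  have nz: "\<forall>i<Suc (Suc ?N). \<forall>j<Suc (Suc ?N). i \<noteq> j \<longrightarrow> ?c i j \<noteq> 0"
  proof (intro allI impI)
    fix i j assume ij: "i < Suc (Suc ?N)" "j < Suc (Suc ?N)" "i \<noteq> j"
    have "?c a b \<noteq> 0" if "a < b" "b \<le> ?N + 1" for a b
      using hs_detl[OF hs that] E_formula[OF D that] by auto
    then show "?c i j \<noteq> 0" using ij cr_anti[of "gp w" "gq w" i j] by (cases "i < j") auto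
  qed
  have trm: "(-1)^i * Sm (omit i w) = sgn ?D * (\<Prod>j\<in>{..<Suc (Suc ?N)} - {i}. sgn (?c i j)) / 2 ^ ?N"
    if i: "i \<le> ?N + 1" for i
  proof -
    let ?e = "\<lambda>k::nat. if k < i then k else Suc k"
    have sg: "sgn (dd k (omit i w)) = ((-1)^i * sgn ?D) * sgn (?c i (?e k))" if "k \<le> ?N" for k
      unfolding dd_omit[OF D i that] by (simp add: sgn_mult sgn_m1pow)
    have pm: "(-1)^i * sgn ?D \<in> {-1, 1::real}" using sD by (cases "even i") auto
    have "(\<Prod>k\<le>?N. sgn (dd k (omit i w))) = ((-1)^i * sgn ?D) ^ Suc ?N * (\<Prod>k\<le>?N. sgn (?c i (?e k)))"
      using sg by (simp add: prod.distrib)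
    also have "((-1)^i * sgn ?D) ^ Suc ?N = (-1)^i * sgn ?D"
      using pm1_pow_even[OF pm ev] by simp
    also have "(\<Prod>k\<le>?N. sgn (?c i (?e k))) = (\<Prod>j\<in>{..<Suc (Suc ?N)} - {i}. sgn (?c i j))"
      by (rule prod.reindex_bij_betw[OF e_bij[OF i]])
    finally have "(\<Prod>k\<le>?N. sgn (dd k (omit i w))) = (-1)^i * sgn ?D * (\<Prod>j\<in>{..<Suc (Suc ?N)} - {i}. sgn (?c i j))" .
    then have "(-1)^i * Sm (omit i w) = ((-1)^i * (-1)^i) * sgn ?D * (\<Prod>j\<in>{..<Suc (Suc ?N)} - {i}. sgn (?c i j)) / 2 ^ ?N"
      unfolding Sm_formula[OF ev] by (simp add: mult_ac)
    also have "(-1::real)^i * (-1)^i = 1" by (simp add: power_add[symmetric])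
    finally show ?thesis by simp
  qed
  have "cobdry Sm w = (\<Sum>i\<le>?N+1. sgn ?D * (\<Prod>j\<in>{..<Suc (Suc ?N)} - {i}. sgn (?c i j)) / 2 ^ ?N)"
    unfolding cobdry_def using trm by (intro sum.cong) auto
  also have "\<dots> = sgn ?D / 2 ^ ?N * (\<Sum>i\<le>?N+1. (\<Prod>j\<in>{..<Suc (Suc ?N)} - {i}. sgn (?c i j)))"
    unfolding sum_distrib_left by (intro sum.cong) auto
  also have "{..?N+1} = {..<Suc (Suc ?N)}" by auto
  also have "(\<Sum>i<Suc (Suc ?N). (\<Prod>j\<in>{..<Suc (Suc ?N)} - {i}. sgn (?c i j))) = 0"
    using ev nz by (intro CL) auto
  finally show ?thesis by simp
qed

theorem lemma8p2:
  fixes dummy :: "'n::{finite,linorder}"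
  assumes "even CARD('n)"
  shows "(\<forall>(v::nat \<Rightarrow> real^'n::{finite,linorder}) (c::nat \<Rightarrow> real).
            (\<forall>i\<le>CARD('n). v i \<noteq> 0 \<and> c i \<noteq> 0) \<longrightarrow>
            Sm (\<lambda>i. c i *\<^sub>R v i) = Sm v)
       \<and> (\<forall>(v::nat \<Rightarrow> real^'n::{finite,linorder}) (g::real^'n::{finite,linorder}^'n::{finite,linorder}).
            invertible g \<longrightarrow> Sm (\<lambda>i. g *v v i) = sgn (det g) * Sm v)
       \<and> (\<forall>w::nat \<Rightarrow> real^'n::{finite,linorder}. hered_spanning w \<longrightarrow> cobdry Sm w = 0)"
  using part1[OF assms] part2[OF assms] part3[OF assms] by blast

end
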